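(* Let $\mathcal{A}$ be an additive category and $\mathrm{Ex}(\mathcal{A})$ the set of all exact structures on $\mathcal{A}$, partially ordered by inclusion. Then $(\mathrm{Ex}(\mathcal{A}),\subseteq)$ is a lattice, with meet $\mathcal{E}\wedge\mathcal{E}'=\mathcal{E}\cap\mathcal{E}'$ and join $\mathcal{E}\vee\mathcal{E}'=\bigcap\{\mathcal{E}''\in\mathrm{Ex}(\mathcal{A}) : \mathcal{E}\subseteq\mathcal{E}'',\ \mathcal{E}'\subseteq\mathcal{E}''\}$.
   Context: An exact structure (in the sense of Quillen) on an additive category $\mathcal{A}$ is a class $\mathcal{E}$ of kernel–cokernel pairs $(i,d)$, closed under isomorphisms, such that: identities are admissible monics and admissible epics; admissible monics are closed under composition, and so are admissible epics; the pushout of an admissible monic along an arbitrary morphism exists and is an admissible monic; the pullback of an admissible epic along an arbitrary morphism exists and is an admissible epic. Here an admissible monic is a morphism $i$ with $(i,d)\in\mathcal{E}$ for some $d$, and an admissible epic dually. It is known (and may be used) that every additive category admits a unique maximal exact structure $\mathcal{E}_{max}$ (containing all exact structures) and a unique minimal one $\mathcal{E}_{min}$, consisting of the split exact sequences. *)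

theory Defs
  imports Main
begin

section \<open>Additive categories (single-sorted presentation)\<close>

text \<open>A category is given by a set of objects, a set of morphisms with domain and
codomain maps, composition (cmp g f = g after f) and identities.\<close>

record ('o, 'm) addcat =
  Ob  :: "'o set"
  Mor :: "'m set"
  dom :: "'m \<Rightarrow> 'o"
  cod :: "'m \<Rightarrow> 'o"
  cmp :: "'m \<Rightarrow> 'm \<Rightarrow> 'm"
  idm :: "'o \<Rightarrow> 'm"
  add :: "'m \<Rightarrow> 'm \<Rightarrow> 'm"
  zer :: "'o \<Rightarrow> 'o \<Rightarrow> 'm"
  neg :: "'m \<Rightarrow> 'm"

definition hom :: "('o, 'm) addcat \<Rightarrow> 'o \<Rightarrow> 'o \<Rightarrow> 'm set" where
  "hom C a b = {f \<in> Mor C. dom C f = a \<and> cod C f = b}"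

definition is_category :: "('o, 'm) addcat \<Rightarrow> bool" where
  "is_category C \<longleftrightarrow>
     (\<forall>f \<in> Mor C. dom C f \<in> Ob C \<and> cod C f \<in> Ob C) \<and>
     (\<forall>a \<in> Ob C. idm C a \<in> hom C a a) \<and>
     (\<forall>a \<in> Ob C. \<forall>b \<in> Ob C. \<forall>c \<in> Ob C. \<forall>f \<in> hom C a b. \<forall>g \<in> hom C b c.
        cmp C g f \<in> hom C a c) \<and>
     (\<forall>a \<in> Ob C. \<forall>b \<in> Ob C. \<forall>c \<in> Ob C. \<forall>d \<in> Ob C.
        \<forall>f \<in> hom C a b. \<forall>g \<in> hom C b c. \<forall>h \<in> hom C c d.
        cmp C h (cmp C g f) = cmp C (cmp C h g) f) \<and>
     (\<forall>a \<in> Ob C. \<forall>b \<in> Ob C. \<forall>f \<in> hom C a b.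
        cmp C f (idm C a) = f \<and> cmp C (idm C b) f = f)"

definition is_preadditive :: "('o, 'm) addcat \<Rightarrow> bool" where
  "is_preadditive C \<longleftrightarrow> is_category C \<and>
     (\<forall>a \<in> Ob C. \<forall>b \<in> Ob C.
        zer C a b \<in> hom C a b \<and>
        (\<forall>f \<in> hom C a b. \<forall>g \<in> hom C a b. add C f g \<in> hom C a b) \<and>
        (\<forall>f \<in> hom C a b. neg C f \<in> hom C a b) \<and>
        (\<forall>f \<in> hom C a b. \<forall>g \<in> hom C a b. \<forall>h \<in> hom C a b.
           add C (add C f g) h = add C f (add C g h)) \<and>
        (\<forall>f \<in> hom C a b. \<forall>g \<in> hom C a b. add C f g = add C g f) \<and>
        (\<forall>f \<in> hom C a b. add C (zer C a b) f = f) \<and>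
        (\<forall>f \<in> hom C a b. add C (neg C f) f = zer C a b)) \<and>
     (\<forall>a \<in> Ob C. \<forall>b \<in> Ob C. \<forall>c \<in> Ob C.
        (\<forall>f \<in> hom C a b. \<forall>g1 \<in> hom C b c. \<forall>g2 \<in> hom C b c.
           cmp C (add C g1 g2) f = add C (cmp C g1 f) (cmp C g2 f)) \<and>
        (\<forall>f1 \<in> hom C a b. \<forall>f2 \<in> hom C a b. \<forall>g \<in> hom C b c.
           cmp C g (add C f1 f2) = add C (cmp C g f1) (cmp C g f2)))"

definition is_additive :: "('o, 'm) addcat \<Rightarrow> bool" where
  "is_additive C \<longleftrightarrow> is_preadditive C \<and>
     (\<exists>z \<in> Ob C. idm C z = zer C z z) \<and>
     (\<forall>a \<in> Ob C. \<forall>b \<in> Ob C. \<exists>c \<in> Ob C.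
        \<exists>p1 \<in> hom C c a. \<exists>p2 \<in> hom C c b. \<exists>i1 \<in> hom C a c. \<exists>i2 \<in> hom C b c.
          cmp C p1 i1 = idm C a \<and> cmp C p2 i2 = idm C b \<and>
          cmp C p1 i2 = zer C b a \<and> cmp C p2 i1 = zer C a b \<and>
          add C (cmp C i1 p1) (cmp C i2 p2) = idm C c)"

definition is_kernel :: "('o, 'm) addcat \<Rightarrow> 'm \<Rightarrow> 'm \<Rightarrow> bool" where
  "is_kernel C i d \<longleftrightarrow> i \<in> Mor C \<and> d \<in> Mor C \<and> cod C i = dom C d \<and>
     cmp C d i = zer C (dom C i) (cod C d) \<and>
     (\<forall>w \<in> Ob C. \<forall>g \<in> hom C w (dom C d). cmp C d g = zer C w (cod C d) \<longrightarrow>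
        (\<exists>!h. h \<in> hom C w (dom C i) \<and> cmp C i h = g))"

definition is_cokernel :: "('o, 'm) addcat \<Rightarrow> 'm \<Rightarrow> 'm \<Rightarrow> bool" where
  "is_cokernel C d i \<longleftrightarrow> i \<in> Mor C \<and> d \<in> Mor C \<and> cod C i = dom C d \<and>
     cmp C d i = zer C (dom C i) (cod C d) \<and>
     (\<forall>w \<in> Ob C. \<forall>g \<in> hom C (cod C i) w. cmp C g i = zer C (dom C i) w \<longrightarrow>
        (\<exists>!h. h \<in> hom C (cod C d) w \<and> cmp C h d = g))"

definition kc_pair :: "('o, 'm) addcat \<Rightarrow> 'm \<Rightarrow> 'm \<Rightarrow> bool" where
  "kc_pair C i d \<longleftrightarrow> is_kernel C i d \<and> is_cokernel C d i"

definition is_iso :: "('o, 'm) addcat \<Rightarrow> 'm \<Rightarrow> bool" where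
  "is_iso C f \<longleftrightarrow> f \<in> Mor C \<and>
     (\<exists>g \<in> hom C (cod C f) (dom C f).
        cmp C g f = idm C (dom C f) \<and> cmp C f g = idm C (cod C f))"

text \<open>Isomorphism of (short) sequences X --i--> Y --d--> Z.\<close>

definition seq_iso :: "('o, 'm) addcat \<Rightarrow> 'm \<times> 'm \<Rightarrow> 'm \<times> 'm \<Rightarrow> bool" where
  "seq_iso C s s' \<longleftrightarrow> (case s of (i, d) \<Rightarrow> case s' of (i', d') \<Rightarrow>
     (\<exists>a b c. is_iso C a \<and> is_iso C b \<and> is_iso C c \<and>
        a \<in> hom C (dom C i) (dom C i') \<and> b \<in> hom C (cod C i) (cod C i') \<and>
        c \<in> hom C (cod C d) (cod C d') \<and>
        cmp C b i = cmp C i' a \<and> cmp C c d = cmp C d' b))"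

definition adm_monic :: "('o, 'm) addcat \<Rightarrow> ('m \<times> 'm) set \<Rightarrow> 'm \<Rightarrow> bool" where
  "adm_monic C E i \<longleftrightarrow> (\<exists>d. (i, d) \<in> E)"

definition adm_epic :: "('o, 'm) addcat \<Rightarrow> ('m \<times> 'm) set \<Rightarrow> 'm \<Rightarrow> bool" where
  "adm_epic C E d \<longleftrightarrow> (\<exists>i. (i, d) \<in> E)"

definition is_pushout :: "('o, 'm) addcat \<Rightarrow> 'm \<Rightarrow> 'm \<Rightarrow> 'm \<Rightarrow> 'm \<Rightarrow> bool" where
  "is_pushout C i f i' f' \<longleftrightarrow>
     i \<in> Mor C \<and> f \<in> Mor C \<and> i' \<in> Mor C \<and> f' \<in> Mor C \<and>
     dom C f = dom C i \<and> dom C i' = cod C f \<and> dom C f' = cod C i \<and>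
     cod C f' = cod C i' \<and> cmp C f' i = cmp C i' f \<and>
     (\<forall>t \<in> Ob C. \<forall>u \<in> hom C (cod C f) t. \<forall>v \<in> hom C (cod C i) t.
        cmp C u f = cmp C v i \<longrightarrow>
        (\<exists>!w. w \<in> hom C (cod C i') t \<and> cmp C w i' = u \<and> cmp C w f' = v))"

definition is_pullback :: "('o, 'm) addcat \<Rightarrow> 'm \<Rightarrow> 'm \<Rightarrow> 'm \<Rightarrow> 'm \<Rightarrow> bool" where
  "is_pullback C d g d' g' \<longleftrightarrow>
     d \<in> Mor C \<and> g \<in> Mor C \<and> d' \<in> Mor C \<and> g' \<in> Mor C \<and>
     cod C g = cod C d \<and> cod C d' = dom C g \<and> cod C g' = dom C d \<and>
     dom C g' = dom C d' \<and> cmp C d g' = cmp C g d' \<and>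
     (\<forall>t \<in> Ob C. \<forall>u \<in> hom C t (dom C g). \<forall>v \<in> hom C t (dom C d).
        cmp C g u = cmp C d v \<longrightarrow>
        (\<exists>!w. w \<in> hom C t (dom C d') \<and> cmp C d' w = u \<and> cmp C g' w = v))"

definition exact_structure :: "('o, 'm) addcat \<Rightarrow> ('m \<times> 'm) set \<Rightarrow> bool" where
  "exact_structure C E \<longleftrightarrow>
     (\<forall>(i, d) \<in> E. kc_pair C i d) \<and>
     (\<forall>s \<in> E. \<forall>i' d'. kc_pair C i' d' \<and> seq_iso C s (i', d') \<longrightarrow> (i', d') \<in> E) \<and>
     (\<forall>a \<in> Ob C. adm_monic C E (idm C a) \<and> adm_epic C E (idm C a)) \<and>
     (\<forall>i j. adm_monic C E i \<and> adm_monic C E j \<and> cod C i = dom C j \<longrightarrow>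
        adm_monic C E (cmp C j i)) \<and>
     (\<forall>d e. adm_epic C E d \<and> adm_epic C E e \<and> cod C d = dom C e \<longrightarrow>
        adm_epic C E (cmp C e d)) \<and>
     (\<forall>i f. adm_monic C E i \<and> f \<in> Mor C \<and> dom C f = dom C i \<longrightarrow>
        (\<exists>i' f'. is_pushout C i f i' f' \<and> adm_monic C E i')) \<and>
     (\<forall>d g. adm_epic C E d \<and> g \<in> Mor C \<and> cod C g = cod C d \<longrightarrow>
        (\<exists>d' g'. is_pullback C d g d' g' \<and> adm_epic C E d'))"

definition Ex :: "('o, 'm) addcat \<Rightarrow> ('m \<times> 'm) set set" where
  "Ex C = {E. exact_structure C E}"

end

theory Submission imports Defs begin

lemma cat_mor_ob: "is_category C \<Longrightarrow> f \<in> Mor C \<Longrightarrow> dom C f \<in> Ob C \<and> cod C f \<in> Ob C"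
  unfolding is_category_def by blast

lemma cat_idm: "is_category C \<Longrightarrow> a \<in> Ob C \<Longrightarrow> idm C a \<in> Mor C \<and> dom C (idm C a) = a \<and> cod C (idm C a) = a"
  unfolding is_category_def hom_def by blast

lemma cat_comp: "is_category C \<Longrightarrow> f \<in> Mor C \<Longrightarrow> g \<in> Mor C \<Longrightarrow> cod C f = dom C g \<Longrightarrow>
   cmp C g f \<in> Mor C \<and> dom C (cmp C g f) = dom C f \<and> cod C (cmp C g f) = cod C g"
proof -
  assume c: "is_category C" and f: "f \<in> Mor C" and g: "g \<in> Mor C" and e: "cod C f = dom C g"
  have "f \<in> hom C (dom C f) (cod C f)" "g \<in> hom C (cod C f) (cod C g)" using f g e by (auto simp: hom_def)
  moreover have "dom C f \<in> Ob C" "cod C f \<in> Ob C" "cod C g \<in> Ob C" using cat_mor_ob[OF c f] cat_mor_ob[OF c g] by auto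
  ultimately have "cmp C g f \<in> hom C (dom C f) (cod C g)" using c unfolding is_category_def by blast
  thus ?thesis by (simp add: hom_def)
qed

lemma cat_assoc: "is_category C \<Longrightarrow> f \<in> Mor C \<Longrightarrow> g \<in> Mor C \<Longrightarrow> h \<in> Mor C \<Longrightarrow> cod C f = dom C g \<Longrightarrow> cod C g = dom C h \<Longrightarrow>
   cmp C h (cmp C g f) = cmp C (cmp C h g) f"
proof -
  assume c: "is_category C" and f: "f \<in> Mor C" and g: "g \<in> Mor C" and h: "h \<in> Mor C" and e: "cod C f = dom C g" "cod C g = dom C h"
  have "f \<in> hom C (dom C f) (cod C f)" "g \<in> hom C (cod C f) (cod C g)" "h \<in> hom C (cod C g) (cod C h)" using f g h e by (auto simp: hom_def)
  moreover have "dom C f \<in> Ob C" "cod C f \<in> Ob C" "cod C g \<in> Ob C" "cod C h \<in> Ob C" using cat_mor_ob[OF c f] cat_mor_ob[OF c g] cat_mor_ob[OF c h] by auto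
  ultimately show ?thesis using c unfolding is_category_def by blast
qed

lemma cat_idl: "is_category C \<Longrightarrow> f \<in> Mor C \<Longrightarrow> cmp C (idm C (cod C f)) f = f"
proof -
  assume c: "is_category C" and f: "f \<in> Mor C"
  have "f \<in> hom C (dom C f) (cod C f)" using f by (auto simp: hom_def)
  thus ?thesis using c cat_mor_ob[OF c f] unfolding is_category_def by blast
qed

lemma cat_idr: "is_category C \<Longrightarrow> f \<in> Mor C \<Longrightarrow> cmp C f (idm C (dom C f)) = f"
proof -
  assume c: "is_category C" and f: "f \<in> Mor C"
  have "f \<in> hom C (dom C f) (cod C f)" using f by (auto simp: hom_def)
  thus ?thesis using c cat_mor_ob[OF c f] unfolding is_category_def by blast
qed

lemma iso_id: "is_category C \<Longrightarrow> a \<in> Ob C \<Longrightarrow> is_iso C (idm C a)"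
  unfolding is_iso_def using cat_idm[of C a] cat_idl[of C "idm C a"]
  by (auto simp: hom_def)


lemma coker_unique:
  assumes c: "is_category C" and d1: "is_cokernel C d1 i" and d2: "is_cokernel C d2 i"
  shows "\<exists>h. is_iso C h \<and> h \<in> hom C (cod C d1) (cod C d2) \<and> cmp C h d1 = d2"
proof -
  note D1 = d1[unfolded is_cokernel_def] and D2 = d2[unfolded is_cokernel_def]
  have ob1: "cod C d1 \<in> Ob C" and ob2: "cod C d2 \<in> Ob C" using D1 D2 cat_mor_ob[OF c] by blast+
  have "d2 \<in> hom C (cod C i) (cod C d2)" using D2 by (simp add: hom_def)
  then obtain h where h: "h \<in> hom C (cod C d1) (cod C d2)" "cmp C h d1 = d2"
    using D1 D2 ob2 by metis
  have "d1 \<in> hom C (cod C i) (cod C d1)" using D1 by (simp add: hom_def)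
  then obtain k where k: "k \<in> hom C (cod C d2) (cod C d1)" "cmp C k d2 = d1"
    using D1 D2 ob1 by metis
  have hm: "h \<in> Mor C" "dom C h = cod C d1" "cod C h = cod C d2" using h by (auto simp: hom_def)
  have km: "k \<in> Mor C" "dom C k = cod C d2" "cod C k = cod C d1" using k by (auto simp: hom_def)
  have u1: "\<exists>!x. x \<in> hom C (cod C d1) (cod C d1) \<and> cmp C x d1 = d1"
    using D1 ob1 \<open>d1 \<in> hom C (cod C i) (cod C d1)\<close> by blast
  have u2: "\<exists>!x. x \<in> hom C (cod C d2) (cod C d2) \<and> cmp C x d2 = d2"
    using D1 D2 ob2 \<open>d2 \<in> hom C (cod C i) (cod C d2)\<close> by blast
  have "cmp C (cmp C k h) d1 = d1" using cat_assoc[OF c, of d1 h k] D1 hm km h k by simp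
  moreover have "cmp C k h \<in> hom C (cod C d1) (cod C d1)" using cat_comp[OF c, of h k] hm km by (simp add: hom_def)
  moreover have "idm C (cod C d1) \<in> hom C (cod C d1) (cod C d1)" "cmp C (idm C (cod C d1)) d1 = d1"
    using cat_idm[OF c ob1] cat_idl[OF c] D1 by (auto simp: hom_def)
  ultimately have kh: "cmp C k h = idm C (cod C d1)" using u1 by blast
  have "cmp C (cmp C h k) d2 = d2" using cat_assoc[OF c, of d2 k h] D2 hm km h k by simp
  moreover have "cmp C h k \<in> hom C (cod C d2) (cod C d2)" using cat_comp[OF c, of k h] hm km by (simp add: hom_def)
  moreover have "idm C (cod C d2) \<in> hom C (cod C d2) (cod C d2)" "cmp C (idm C (cod C d2)) d2 = d2"
    using cat_idm[OF c ob2] cat_idl[OF c] D2 by (auto simp: hom_def)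
  ultimately have hk: "cmp C h k = idm C (cod C d2)" using u2 by blast
  have "is_iso C h" unfolding is_iso_def using hm km kh hk k by auto
  thus ?thesis using h by blast
qed

lemma ker_unique:
  assumes c: "is_category C" and i1: "is_kernel C i1 d" and i2: "is_kernel C i2 d"
  shows "\<exists>h. is_iso C h \<and> h \<in> hom C (dom C i1) (dom C i2) \<and> cmp C i2 h = i1"
proof -
  note D1 = i1[unfolded is_kernel_def] and D2 = i2[unfolded is_kernel_def]
  have ob1: "dom C i1 \<in> Ob C" and ob2: "dom C i2 \<in> Ob C" using D1 D2 cat_mor_ob[OF c] by blast+
  have g1: "i1 \<in> hom C (dom C i1) (dom C d)" using D1 by (simp add: hom_def)
  have g2: "i2 \<in> hom C (dom C i2) (dom C d)" using D2 by (simp add: hom_def)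
  obtain h where h: "h \<in> hom C (dom C i1) (dom C i2)" "cmp C i2 h = i1"
    using D1 D2 ob1 g1 by metis
  obtain k where k: "k \<in> hom C (dom C i2) (dom C i1)" "cmp C i1 k = i2"
    using D1 D2 ob2 g2 by metis
  have hm: "h \<in> Mor C" "dom C h = dom C i1" "cod C h = dom C i2" using h by (auto simp: hom_def)
  have km: "k \<in> Mor C" "dom C k = dom C i2" "cod C k = dom C i1" using k by (auto simp: hom_def)
  have u1: "\<exists>!x. x \<in> hom C (dom C i1) (dom C i1) \<and> cmp C i1 x = i1"
    using D1 ob1 g1 by blast
  have u2: "\<exists>!x. x \<in> hom C (dom C i2) (dom C i2) \<and> cmp C i2 x = i2"
    using D2 ob2 g2 by blast
  have "cmp C i1 (cmp C k h) = i1" using cat_assoc[OF c, of h k i1] D1 hm km h k by simp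
  moreover have "cmp C k h \<in> hom C (dom C i1) (dom C i1)" using cat_comp[OF c, of h k] hm km by (simp add: hom_def)
  moreover have "idm C (dom C i1) \<in> hom C (dom C i1) (dom C i1)" "cmp C i1 (idm C (dom C i1)) = i1"
    using cat_idm[OF c ob1] cat_idr[OF c] D1 by (auto simp: hom_def)
  ultimately have kh: "cmp C k h = idm C (dom C i1)" using u1 by blast
  have "cmp C i2 (cmp C h k) = i2" using cat_assoc[OF c, of k h i2] D2 hm km h k by simp
  moreover have "cmp C h k \<in> hom C (dom C i2) (dom C i2)" using cat_comp[OF c, of k h] hm km by (simp add: hom_def)
  moreover have "idm C (dom C i2) \<in> hom C (dom C i2) (dom C i2)" "cmp C i2 (idm C (dom C i2)) = i2"
    using cat_idm[OF c ob2] cat_idr[OF c] D2 by (auto simp: hom_def)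
  ultimately have hk: "cmp C h k = idm C (dom C i2)" using u2 by blast
  have "is_iso C h" unfolding is_iso_def using hm km kh hk k by auto
  thus ?thesis using h by blast
qed


lemma cmp_mor[simp]: "is_category C \<Longrightarrow> f \<in> Mor C \<Longrightarrow> g \<in> Mor C \<Longrightarrow> cod C f = dom C g \<Longrightarrow> cmp C g f \<in> Mor C"
  using cat_comp[of C f g] by simp
lemma cmp_dom[simp]: "is_category C \<Longrightarrow> f \<in> Mor C \<Longrightarrow> g \<in> Mor C \<Longrightarrow> cod C f = dom C g \<Longrightarrow> dom C (cmp C g f) = dom C f"
  using cat_comp[of C f g] by simp
lemma cmp_cod[simp]: "is_category C \<Longrightarrow> f \<in> Mor C \<Longrightarrow> g \<in> Mor C \<Longrightarrow> cod C f = dom C g \<Longrightarrow> cod C (cmp C g f) = cod C g"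
  using cat_comp[of C f g] by simp

lemma ker_univ: "is_kernel C i d \<Longrightarrow> w \<in> Ob C \<Longrightarrow> g \<in> hom C w (dom C d) \<Longrightarrow> cmp C d g = zer C w (cod C d) \<Longrightarrow>
  \<exists>!h. h \<in> hom C w (dom C i) \<and> cmp C i h = g"
  unfolding is_kernel_def by (elim conjE, drule bspec, assumption, drule bspec, assumption, erule mp, assumption)
lemma coker_univ: "is_cokernel C d i \<Longrightarrow> w \<in> Ob C \<Longrightarrow> g \<in> hom C (cod C i) w \<Longrightarrow> cmp C g i = zer C (dom C i) w \<Longrightarrow>
  \<exists>!h. h \<in> hom C (cod C d) w \<and> cmp C h d = g"
  unfolding is_cokernel_def by (elim conjE, drule bspec, assumption, drule bspec, assumption, erule mp, assumption)
lemma ex1_eq: "\<exists>!x. P x \<Longrightarrow> P a \<Longrightarrow> P b \<Longrightarrow> a = b" by blast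

lemma kc_transport:
  assumes c: "is_category C" and kc: "kc_pair C i d"
    and p: "p \<in> Mor C" and q: "q \<in> Mor C" and dp: "dom C p = cod C i" and cq: "cod C q = cod C i"
    and dq: "dom C q = cod C p" and qp: "cmp C q p = idm C (cod C i)" and pq: "cmp C p q = idm C (cod C p)"
  shows "kc_pair C (cmp C p i) (cmp C d q)"
proof -
  have K: "is_kernel C i d" and CK: "is_cokernel C d i" using kc by (auto simp: kc_pair_def)
  note K' = K[unfolded is_kernel_def] and CK' = CK[unfolded is_cokernel_def]
  have im: "i \<in> Mor C" and dm: "d \<in> Mor C" and id: "cod C i = dom C d" and di: "cmp C d i = zer C (dom C i) (cod C d)"
    using K' by auto
  have jm: "cmp C p i \<in> Mor C" "dom C (cmp C p i) = dom C i" "cod C (cmp C p i) = cod C p"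
    using c im p dp by auto
  have em: "cmp C d q \<in> Mor C" "dom C (cmp C d q) = cod C p" "cod C (cmp C d q) = cod C d"
    using c dm q cq id dq by auto
  have qpi: "cmp C q (cmp C p i) = i"
    using cat_assoc[OF c im p q] dp dq qp cat_idl[OF c im] by simp
  have ej: "cmp C (cmp C d q) (cmp C p i) = cmp C d i"
    using cat_assoc[OF c jm(1) q dm] jm dq cq id qpi by simp
  have ker: "is_kernel C (cmp C p i) (cmp C d q)"
    unfolding is_kernel_def
  proof (intro conjI ballI impI)
    show "cmp C p i \<in> Mor C" "cmp C d q \<in> Mor C" "cod C (cmp C p i) = dom C (cmp C d q)" using jm em by auto
    show "cmp C (cmp C d q) (cmp C p i) = zer C (dom C (cmp C p i)) (cod C (cmp C d q))"
      using ej di jm em by simp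
    fix w g assume w: "w \<in> Ob C" and g: "g \<in> hom C w (dom C (cmp C d q))"
      and gz: "cmp C (cmp C d q) g = zer C w (cod C (cmp C d q))"
    have gm: "g \<in> Mor C" "dom C g = w" "cod C g = cod C p" using g em by (auto simp: hom_def)
    have qg: "cmp C q g \<in> hom C w (dom C d)" using c gm q dq cq id by (simp add: hom_def)
    have "cmp C d (cmp C q g) = zer C w (cod C d)"
      using cat_assoc[OF c gm(1) q dm] gm dq cq id gz em by simp
    then have ex: "\<exists>!h. h \<in> hom C w (dom C i) \<and> cmp C i h = cmp C q g" using ker_univ[OF K w qg] by blast
    show "\<exists>!h. h \<in> hom C w (dom C (cmp C p i)) \<and> cmp C (cmp C p i) h = g"
    proof -
      obtain h where h: "h \<in> hom C w (dom C i)" "cmp C i h = cmp C q g" using ex by blast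
      have hm: "h \<in> Mor C" "dom C h = w" "cod C h = dom C i" using h by (auto simp: hom_def)
      have "cmp C (cmp C p i) h = cmp C p (cmp C q g)"
        using cat_assoc[OF c hm(1) im p] hm dp h by simp
      also have "\<dots> = g" using cat_assoc[OF c gm(1) q p] gm dq cq dp pq cat_idl[OF c gm(1)] by simp
      finally have E: "cmp C (cmp C p i) h = g" .
      have U: "h2 = h" if h2: "h2 \<in> hom C w (dom C (cmp C p i))" "cmp C (cmp C p i) h2 = g" for h2
      proof -
        have h2m: "h2 \<in> Mor C" "dom C h2 = w" "cod C h2 = dom C i" using h2 jm by (auto simp: hom_def)
        have "cmp C i h2 = cmp C q (cmp C (cmp C p i) h2)"
          using cat_assoc[OF c h2m(1) jm(1) q] h2m jm dq qpi by simp
        also have "\<dots> = cmp C q g" using h2 by simp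
        finally have "cmp C i h2 = cmp C q g" .
        moreover have "h2 \<in> hom C w (dom C i)" using h2m by (simp add: hom_def)
        ultimately show ?thesis using ex1_eq[OF ex, of h2 h] h by blast
      qed
      show ?thesis
      proof (rule ex1I[of _ h])
        show "h \<in> hom C w (dom C (cmp C p i)) \<and> cmp C (cmp C p i) h = g" using E h jm by simp
      next
        fix y assume "y \<in> hom C w (dom C (cmp C p i)) \<and> cmp C (cmp C p i) y = g"
        then show "y = h" using U by blast
      qed
    qed
  qed
  have coker: "is_cokernel C (cmp C d q) (cmp C p i)"
    unfolding is_cokernel_def
  proof (intro conjI ballI impI)
    show "cmp C p i \<in> Mor C" "cmp C d q \<in> Mor C" "cod C (cmp C p i) = dom C (cmp C d q)" using jm em by auto
    show "cmp C (cmp C d q) (cmp C p i) = zer C (dom C (cmp C p i)) (cod C (cmp C d q))"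
      using ej di jm em by simp
    fix w g assume w: "w \<in> Ob C" and g: "g \<in> hom C (cod C (cmp C p i)) w"
      and gz: "cmp C g (cmp C p i) = zer C (dom C (cmp C p i)) w"
    have gm: "g \<in> Mor C" "dom C g = cod C p" "cod C g = w" using g jm by (auto simp: hom_def)
    have gp: "cmp C g p \<in> hom C (cod C i) w" using c gm p dp by (simp add: hom_def)
    have "cmp C (cmp C g p) i = zer C (dom C i) w"
      using cat_assoc[OF c im p gm(1)] gm dp gz jm by simp
    then have ex: "\<exists>!h. h \<in> hom C (cod C d) w \<and> cmp C h d = cmp C g p" using coker_univ[OF CK w gp] by blast
    show "\<exists>!h. h \<in> hom C (cod C (cmp C d q)) w \<and> cmp C h (cmp C d q) = g"
    proof -
      obtain h where h: "h \<in> hom C (cod C d) w" "cmp C h d = cmp C g p" using ex by blast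
      have hm: "h \<in> Mor C" "dom C h = cod C d" "cod C h = w" using h by (auto simp: hom_def)
      have "cmp C h (cmp C d q) = cmp C (cmp C g p) q"
        using cat_assoc[OF c q dm hm(1)] hm cq id h by simp
      also have "\<dots> = g" using cat_assoc[OF c q p gm(1)] gm dq cq dp pq cat_idr[OF c gm(1)] by simp
      finally have E: "cmp C h (cmp C d q) = g" .
      have U: "h2 = h" if h2: "h2 \<in> hom C (cod C (cmp C d q)) w" "cmp C h2 (cmp C d q) = g" for h2
      proof -
        have h2m: "h2 \<in> Mor C" "dom C h2 = cod C d" "cod C h2 = w" using h2 em by (auto simp: hom_def)
        have dqp: "cmp C (cmp C d q) p = d"
          using cat_assoc[OF c p q dm] dq cq id qp cat_idr[OF c dm] by simp
        have "cmp C h2 d = cmp C (cmp C h2 (cmp C d q)) p"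
          using cat_assoc[OF c p em(1) h2m(1)] h2m em dqp by simp
        also have "\<dots> = cmp C g p" using h2 by simp
        finally have "cmp C h2 d = cmp C g p" .
        moreover have "h2 \<in> hom C (cod C d) w" using h2m by (simp add: hom_def)
        ultimately show ?thesis using ex1_eq[OF ex, of h2 h] h by blast
      qed
      show ?thesis
      proof (rule ex1I[of _ h])
        show "h \<in> hom C (cod C (cmp C d q)) w \<and> cmp C h (cmp C d q) = g" using E h em by simp
      next
        fix y assume "y \<in> hom C (cod C (cmp C d q)) w \<and> cmp C y (cmp C d q) = g"
        then show "y = h" using U by blast
      qed
    qed
  qed
  show ?thesis using ker coker by (simp add: kc_pair_def)
qed


lemma po_univ: "is_pushout C i f i' f' \<Longrightarrow> t \<in> Ob C \<Longrightarrow> u \<in> hom C (cod C f) t \<Longrightarrow> v \<in> hom C (cod C i) t \<Longrightarrow>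
  cmp C u f = cmp C v i \<Longrightarrow> \<exists>!w. w \<in> hom C (cod C i') t \<and> cmp C w i' = u \<and> cmp C w f' = v"
  unfolding is_pushout_def
  by (elim conjE, drule bspec, assumption, drule bspec, assumption, drule bspec, assumption, erule mp, assumption)

lemma pb_univ: "is_pullback C d g d' g' \<Longrightarrow> t \<in> Ob C \<Longrightarrow> u \<in> hom C t (dom C g) \<Longrightarrow> v \<in> hom C t (dom C d) \<Longrightarrow>
  cmp C g u = cmp C d v \<Longrightarrow> \<exists>!w. w \<in> hom C t (dom C d') \<and> cmp C d' w = u \<and> cmp C g' w = v"
  unfolding is_pullback_def
  by (elim conjE, drule bspec, assumption, drule bspec, assumption, drule bspec, assumption, erule mp, assumption)

lemma po_unique:
  assumes c: "is_category C" and P1: "is_pushout C i f i1 f1" and P2: "is_pushout C i f i2 f2"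
  shows "\<exists>p q. p \<in> hom C (cod C i1) (cod C i2) \<and> q \<in> hom C (cod C i2) (cod C i1) \<and>
     cmp C p i1 = i2 \<and> cmp C q p = idm C (cod C i1) \<and> cmp C p q = idm C (cod C i2)"
proof -
  note A = P1[unfolded is_pushout_def] and B = P2[unfolded is_pushout_def]
  have o1: "cod C i1 \<in> Ob C" and o2: "cod C i2 \<in> Ob C" using A B cat_mor_ob[OF c] by blast+
  have u2: "i2 \<in> hom C (cod C f) (cod C i2)" "f2 \<in> hom C (cod C i) (cod C i2)" "cmp C i2 f = cmp C f2 i"
    using B by (auto simp: hom_def)
  have u1: "i1 \<in> hom C (cod C f) (cod C i1)" "f1 \<in> hom C (cod C i) (cod C i1)" "cmp C i1 f = cmp C f1 i"
    using A by (auto simp: hom_def)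
  obtain p where p: "p \<in> hom C (cod C i1) (cod C i2)" "cmp C p i1 = i2" "cmp C p f1 = f2"
    using po_univ[OF P1 o2 u2] by blast
  obtain q where q: "q \<in> hom C (cod C i2) (cod C i1)" "cmp C q i2 = i1" "cmp C q f2 = f1"
    using po_univ[OF P2 o1 u1] by blast
  have pm: "p \<in> Mor C" "dom C p = cod C i1" "cod C p = cod C i2" using p by (auto simp: hom_def)
  have qm: "q \<in> Mor C" "dom C q = cod C i2" "cod C q = cod C i1" using q by (auto simp: hom_def)
  have i1m: "i1 \<in> Mor C" "f1 \<in> Mor C" "cod C f1 = cod C i1" using A by auto
  have i2m: "i2 \<in> Mor C" "f2 \<in> Mor C" "cod C f2 = cod C i2" using B by auto
  have "cmp C (cmp C q p) i1 = i1" using cat_assoc[OF c i1m(1) pm(1) qm(1)] pm qm p q by simp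
  moreover have "cmp C (cmp C q p) f1 = f1" using cat_assoc[OF c i1m(2) pm(1) qm(1)] pm qm p q i1m by simp
  moreover have "cmp C q p \<in> hom C (cod C i1) (cod C i1)" using c pm qm by (simp add: hom_def)
  moreover have "idm C (cod C i1) \<in> hom C (cod C i1) (cod C i1)" "cmp C (idm C (cod C i1)) i1 = i1"
     "cmp C (idm C (cod C i1)) f1 = f1"
    using cat_idm[OF c o1] cat_idl[OF c i1m(1)] cat_idl[OF c i1m(2)] i1m by (auto simp: hom_def)
  ultimately have qp: "cmp C q p = idm C (cod C i1)"
    using ex1_eq[OF po_univ[OF P1 o1 u1]] by blast
  have "cmp C (cmp C p q) i2 = i2" using cat_assoc[OF c i2m(1) qm(1) pm(1)] pm qm p q by simp
  moreover have "cmp C (cmp C p q) f2 = f2" using cat_assoc[OF c i2m(2) qm(1) pm(1)] pm qm p q i2m by simp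
  moreover have "cmp C p q \<in> hom C (cod C i2) (cod C i2)" using c pm qm by (simp add: hom_def)
  moreover have "idm C (cod C i2) \<in> hom C (cod C i2) (cod C i2)" "cmp C (idm C (cod C i2)) i2 = i2"
     "cmp C (idm C (cod C i2)) f2 = f2"
    using cat_idm[OF c o2] cat_idl[OF c i2m(1)] cat_idl[OF c i2m(2)] i2m by (auto simp: hom_def)
  ultimately have pq: "cmp C p q = idm C (cod C i2)"
    using ex1_eq[OF po_univ[OF P2 o2 u2]] by blast
  show ?thesis using p q qp pq by blast
qed

lemma pb_unique:
  assumes c: "is_category C" and P1: "is_pullback C d g d1 g1" and P2: "is_pullback C d g d2 g2"
  shows "\<exists>p q. p \<in> hom C (dom C d1) (dom C d2) \<and> q \<in> hom C (dom C d2) (dom C d1) \<and>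
     cmp C d2 p = d1 \<and> cmp C q p = idm C (dom C d1) \<and> cmp C p q = idm C (dom C d2)"
proof -
  note A = P1[unfolded is_pullback_def] and B = P2[unfolded is_pullback_def]
  have o1: "dom C d1 \<in> Ob C" and o2: "dom C d2 \<in> Ob C" using A B cat_mor_ob[OF c] by blast+
  have u2: "d2 \<in> hom C (dom C d2) (dom C g)" "g2 \<in> hom C (dom C d2) (dom C d)" "cmp C g d2 = cmp C d g2"
    using B by (auto simp: hom_def)
  have u1: "d1 \<in> hom C (dom C d1) (dom C g)" "g1 \<in> hom C (dom C d1) (dom C d)" "cmp C g d1 = cmp C d g1"
    using A by (auto simp: hom_def)
  obtain p where p: "p \<in> hom C (dom C d1) (dom C d2)" "cmp C d2 p = d1" "cmp C g2 p = g1"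
    using pb_univ[OF P2 o1 u1] by blast
  obtain q where q: "q \<in> hom C (dom C d2) (dom C d1)" "cmp C d1 q = d2" "cmp C g1 q = g2"
    using pb_univ[OF P1 o2 u2] by blast
  have pm: "p \<in> Mor C" "dom C p = dom C d1" "cod C p = dom C d2" using p by (auto simp: hom_def)
  have qm: "q \<in> Mor C" "dom C q = dom C d2" "cod C q = dom C d1" using q by (auto simp: hom_def)
  have i1m: "d1 \<in> Mor C" "g1 \<in> Mor C" "dom C g1 = dom C d1" using A by auto
  have i2m: "d2 \<in> Mor C" "g2 \<in> Mor C" "dom C g2 = dom C d2" using B by auto
  have "cmp C d1 (cmp C q p) = d1" using cat_assoc[OF c pm(1) qm(1) i1m(1)] pm qm p q by simp
  moreover have "cmp C g1 (cmp C q p) = g1" using cat_assoc[OF c pm(1) qm(1) i1m(2)] pm qm p q i1m by simp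
  moreover have "cmp C q p \<in> hom C (dom C d1) (dom C d1)" using c pm qm by (simp add: hom_def)
  moreover have "idm C (dom C d1) \<in> hom C (dom C d1) (dom C d1)" "cmp C d1 (idm C (dom C d1)) = d1"
     "cmp C g1 (idm C (dom C d1)) = g1"
    using cat_idm[OF c o1] cat_idr[OF c i1m(1)] cat_idr[OF c i1m(2)] i1m by (auto simp: hom_def)
  ultimately have qp: "cmp C q p = idm C (dom C d1)"
    using ex1_eq[OF pb_univ[OF P1 o1 u1]] by blast
  have "cmp C d2 (cmp C p q) = d2" using cat_assoc[OF c qm(1) pm(1) i2m(1)] pm qm p q by simp
  moreover have "cmp C g2 (cmp C p q) = g2" using cat_assoc[OF c qm(1) pm(1) i2m(2)] pm qm p q i2m by simp
  moreover have "cmp C p q \<in> hom C (dom C d2) (dom C d2)" using c pm qm by (simp add: hom_def)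
  moreover have "idm C (dom C d2) \<in> hom C (dom C d2) (dom C d2)" "cmp C d2 (idm C (dom C d2)) = d2"
     "cmp C g2 (idm C (dom C d2)) = g2"
    using cat_idm[OF c o2] cat_idr[OF c i2m(1)] cat_idr[OF c i2m(2)] i2m by (auto simp: hom_def)
  ultimately have pq: "cmp C p q = idm C (dom C d2)"
    using ex1_eq[OF pb_univ[OF P2 o2 u2]] by blast
  show ?thesis using p q qp pq by blast
qed


lemma ex_kc: "exact_structure C F \<Longrightarrow> (i, d) \<in> F \<Longrightarrow> kc_pair C i d"
  unfolding exact_structure_def by fast

lemma ex_isoc: "exact_structure C F \<Longrightarrow> s \<in> F \<Longrightarrow> kc_pair C i' d' \<Longrightarrow> seq_iso C s (i', d') \<Longrightarrow> (i', d') \<in> F"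
  unfolding exact_structure_def by fast

lemma close_d:
  assumes c: "is_category C" and F: "exact_structure C F" and id: "(i, d) \<in> F" and k0: "kc_pair C i d0"
  shows "(i, d0) \<in> F"
proof -
  have k: "kc_pair C i d" using ex_kc[OF F id] .
  obtain h where h: "is_iso C h" "h \<in> hom C (cod C d) (cod C d0)" "cmp C h d = d0"
    using coker_unique[OF c] k k0 unfolding kc_pair_def by blast
  have m: "i \<in> Mor C" "d0 \<in> Mor C" "cod C i = dom C d0" "cod C i = dom C d" using k k0 unfolding kc_pair_def is_kernel_def by auto
  have ob: "dom C i \<in> Ob C" "cod C i \<in> Ob C" using cat_mor_ob[OF c m(1)] by auto
  have "seq_iso C (i, d) (i, d0)"
    unfolding seq_iso_def prod.case
    apply (rule exI[of _ "idm C (dom C i)"], rule exI[of _ "idm C (cod C i)"], rule exI[of _ h])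
    using h iso_id[OF c ob(1)] iso_id[OF c ob(2)] cat_idm[OF c ob(1)] cat_idm[OF c ob(2)]
      cat_idl[OF c m(1)] cat_idr[OF c m(1)] cat_idr[OF c m(2)] m
    by (auto simp: hom_def)
  then show ?thesis using ex_isoc[OF F id k0] by blast
qed

lemma close_i:
  assumes c: "is_category C" and F: "exact_structure C F" and id: "(i, d) \<in> F" and k0: "kc_pair C i0 d"
  shows "(i0, d) \<in> F"
proof -
  have k: "kc_pair C i d" using ex_kc[OF F id] .
  obtain h where h: "is_iso C h" "h \<in> hom C (dom C i) (dom C i0)" "cmp C i0 h = i"
    using ker_unique[OF c] k k0 unfolding kc_pair_def by blast
  have m: "i \<in> Mor C" "d \<in> Mor C" "cod C i = dom C d" "cod C i0 = dom C d" "i0 \<in> Mor C" using k k0 unfolding kc_pair_def is_kernel_def by auto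
  have ob: "dom C d \<in> Ob C" "cod C d \<in> Ob C" using cat_mor_ob[OF c m(2)] by auto
  have "seq_iso C (i, d) (i0, d)"
    unfolding seq_iso_def prod.case
    apply (rule exI[of _ h], rule exI[of _ "idm C (cod C i)"], rule exI[of _ "idm C (cod C d)"])
    using h iso_id[OF c ob(1)] iso_id[OF c ob(2)] cat_idm[OF c ob(1)] cat_idm[OF c ob(2)]
      cat_idl[OF c m(1)] cat_idl[OF c m(2)] cat_idr[OF c m(2)] m
    by (auto simp: hom_def)
  then show ?thesis using ex_isoc[OF F id k0] by blast
qed

lemma transp_F:
  assumes c: "is_category C" and F: "exact_structure C F" and id: "(i, d) \<in> F"
    and p: "p \<in> Mor C" and q: "q \<in> Mor C" and dp: "dom C p = cod C i" and cq: "cod C q = cod C i"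
    and dq: "dom C q = cod C p" and qp: "cmp C q p = idm C (cod C i)" and pq: "cmp C p q = idm C (cod C p)"
  shows "(cmp C p i, cmp C d q) \<in> F"
proof -
  have k: "kc_pair C i d" using ex_kc[OF F id] .
  have k2: "kc_pair C (cmp C p i) (cmp C d q)" using kc_transport[OF c k p q dp cq dq qp pq] .
  have m: "i \<in> Mor C" "d \<in> Mor C" "cod C i = dom C d" using k unfolding kc_pair_def is_kernel_def by auto
  have ob: "dom C i \<in> Ob C" "cod C d \<in> Ob C" using cat_mor_ob[OF c m(1)] cat_mor_ob[OF c m(2)] by auto
  have isp: "is_iso C p" unfolding is_iso_def using p q dq cq dp qp pq by (auto simp: hom_def)
  have dqp: "cmp C (cmp C d q) p = d"
    using cat_assoc[OF c p q m(2)] dq cq dp m qp cat_idr[OF c m(2)] by simp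
  have pim: "cmp C p i \<in> Mor C" "dom C (cmp C p i) = dom C i" "cod C (cmp C p i) = cod C p"
    using c m p dp by auto
  have dqm: "cod C (cmp C d q) = cod C d" using c m q cq by auto
  have "seq_iso C (i, d) (cmp C p i, cmp C d q)"
    unfolding seq_iso_def prod.case
    apply (rule exI[of _ "idm C (dom C i)"], rule exI[of _ p], rule exI[of _ "idm C (cod C d)"])
    using isp iso_id[OF c ob(1)] iso_id[OF c ob(2)] cat_idm[OF c ob(1)] cat_idm[OF c ob(2)]
      cat_idl[OF c m(2)] m p q dp cq dq
      cat_idr[OF c pim(1)] pim dqm dqp
    by (auto simp: hom_def)
  then show ?thesis using ex_isoc[OF F id k2] by blast
qed


lemma mono_common:
  assumes c: "is_category C" and ne: "F0 \<in> FF" and ex: "\<forall>F\<in>FF. exact_structure C F"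
    and all: "\<forall>F\<in>FF. adm_monic C F i"
  shows "adm_monic C (\<Inter>FF) i"
proof -
  obtain d0 where d0: "(i, d0) \<in> F0" using all ne unfolding adm_monic_def by blast
  have k0: "kc_pair C i d0" using ex_kc[OF _ d0] ex ne by blast
  have "(i, d0) \<in> F" if F: "F \<in> FF" for F
  proof -
    obtain d where "(i, d) \<in> F" using all F unfolding adm_monic_def by blast
    thus ?thesis using close_d[OF c _ _ k0] ex F by blast
  qed
  thus ?thesis unfolding adm_monic_def by blast
qed

lemma epi_common:
  assumes c: "is_category C" and ne: "F0 \<in> FF" and ex: "\<forall>F\<in>FF. exact_structure C F"
    and all: "\<forall>F\<in>FF. adm_epic C F d"
  shows "adm_epic C (\<Inter>FF) d"
proof -
  obtain i0 where i0: "(i0, d) \<in> F0" using all ne unfolding adm_epic_def by blast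
  have k0: "kc_pair C i0 d" using ex_kc[OF _ i0] ex ne by blast
  have "(i0, d) \<in> F" if F: "F \<in> FF" for F
  proof -
    obtain i where "(i, d) \<in> F" using all F unfolding adm_epic_def by blast
    thus ?thesis using close_i[OF c _ _ k0] ex F by blast
  qed
  thus ?thesis unfolding adm_epic_def by blast
qed

lemma inter_monic: "adm_monic C (\<Inter>FF) i \<Longrightarrow> F \<in> FF \<Longrightarrow> adm_monic C F i"
  unfolding adm_monic_def by blast
lemma inter_epic: "adm_epic C (\<Inter>FF) i \<Longrightarrow> F \<in> FF \<Longrightarrow> adm_epic C F i"
  unfolding adm_epic_def by blast

lemma exD:
  assumes "exact_structure C E"
  shows "\<forall>a \<in> Ob C. adm_monic C E (idm C a) \<and> adm_epic C E (idm C a)"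
   "\<forall>i j. adm_monic C E i \<and> adm_monic C E j \<and> cod C i = dom C j \<longrightarrow> adm_monic C E (cmp C j i)"
   "\<forall>d e. adm_epic C E d \<and> adm_epic C E e \<and> cod C d = dom C e \<longrightarrow> adm_epic C E (cmp C e d)"
   "\<forall>i f. adm_monic C E i \<and> f \<in> Mor C \<and> dom C f = dom C i \<longrightarrow>
        (\<exists>i' f'. is_pushout C i f i' f' \<and> adm_monic C E i')"
   "\<forall>d g. adm_epic C E d \<and> g \<in> Mor C \<and> cod C g = cod C d \<longrightarrow>
        (\<exists>d' g'. is_pullback C d g d' g' \<and> adm_epic C E d')"
  using assms unfolding exact_structure_def by blast+

lemma inter_exact:
  assumes c: "is_category C" and ne: "F0 \<in> FF" and ex: "\<forall>F\<in>FF. exact_structure C F"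
  shows "exact_structure C (\<Inter>FF)"
  unfolding exact_structure_def
proof (intro conjI)
  have E0: "exact_structure C F0" using ex ne by blast
  show "\<forall>(i, d)\<in>\<Inter>FF. kc_pair C i d"
  proof clarify
    fix i d assume "(i, d) \<in> \<Inter>FF"
    hence "(i, d) \<in> F0" using ne by (rule InterD)
    thus "kc_pair C i d" by (rule ex_kc[OF E0])
  qed
  show "\<forall>s\<in>\<Inter>FF. \<forall>i' d'. kc_pair C i' d' \<and> seq_iso C s (i', d') \<longrightarrow> (i', d') \<in> \<Inter>FF"
  proof (intro ballI allI impI)
    fix s i' d' assume s: "s \<in> \<Inter>FF" and h: "kc_pair C i' d' \<and> seq_iso C s (i', d')"
    show "(i', d') \<in> \<Inter>FF"
    proof
      fix F assume F: "F \<in> FF"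
      have "s \<in> F" using s F by blast
      thus "(i', d') \<in> F" using ex_isoc[of C F s i' d'] ex F h by blast
    qed
  qed
  show "\<forall>a\<in>Ob C. adm_monic C (\<Inter>FF) (idm C a) \<and> adm_epic C (\<Inter>FF) (idm C a)"
  proof
    fix a assume a: "a \<in> Ob C"
    have "\<forall>F\<in>FF. adm_monic C F (idm C a)" "\<forall>F\<in>FF. adm_epic C F (idm C a)"
      using exD(1) ex a by blast+
    thus "adm_monic C (\<Inter>FF) (idm C a) \<and> adm_epic C (\<Inter>FF) (idm C a)"
      using mono_common[OF c ne ex] epi_common[OF c ne ex] by blast
  qed
  show "\<forall>i j. adm_monic C (\<Inter>FF) i \<and> adm_monic C (\<Inter>FF) j \<and> cod C i = dom C j \<longrightarrow> adm_monic C (\<Inter>FF) (cmp C j i)"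
  proof (intro allI impI)
    fix i j assume h: "adm_monic C (\<Inter>FF) i \<and> adm_monic C (\<Inter>FF) j \<and> cod C i = dom C j"
    have "\<forall>F\<in>FF. adm_monic C F (cmp C j i)"
    proof
      fix F assume F: "F \<in> FF"
      have EF: "exact_structure C F" using ex F by blast
      have "adm_monic C F i" "adm_monic C F j" using h inter_monic[OF _ F] by blast+
      thus "adm_monic C F (cmp C j i)" using exD(2)[OF EF, rule_format, of i j] h by blast
    qed
    thus "adm_monic C (\<Inter>FF) (cmp C j i)" using mono_common[OF c ne ex] by blast
  qed
  show "\<forall>d e. adm_epic C (\<Inter>FF) d \<and> adm_epic C (\<Inter>FF) e \<and> cod C d = dom C e \<longrightarrow> adm_epic C (\<Inter>FF) (cmp C e d)"
  proof (intro allI impI)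
    fix d e assume h: "adm_epic C (\<Inter>FF) d \<and> adm_epic C (\<Inter>FF) e \<and> cod C d = dom C e"
    have "\<forall>F\<in>FF. adm_epic C F (cmp C e d)"
    proof
      fix F assume F: "F \<in> FF"
      have EF: "exact_structure C F" using ex F by blast
      have "adm_epic C F d" "adm_epic C F e" using h inter_epic[OF _ F] by blast+
      thus "adm_epic C F (cmp C e d)" using exD(3)[OF EF, rule_format, of d e] h by blast
    qed
    thus "adm_epic C (\<Inter>FF) (cmp C e d)" using epi_common[OF c ne ex] by blast
  qed
  show "\<forall>i f. adm_monic C (\<Inter>FF) i \<and> f \<in> Mor C \<and> dom C f = dom C i \<longrightarrow>
        (\<exists>i' f'. is_pushout C i f i' f' \<and> adm_monic C (\<Inter>FF) i')"
  proof (intro allI impI)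
    fix i f assume h: "adm_monic C (\<Inter>FF) i \<and> f \<in> Mor C \<and> dom C f = dom C i"
    have "adm_monic C F0 i" using h inter_monic[OF _ ne] by blast
    then obtain i1 f1 where P1: "is_pushout C i f i1 f1" using exD(4)[OF E0, rule_format, of i f] h by blast
    have "\<forall>F\<in>FF. adm_monic C F i1"
    proof
      fix F assume F: "F \<in> FF"
      have EF: "exact_structure C F" using ex F by blast
      have "adm_monic C F i" using h inter_monic[OF _ F] by blast
      then obtain i2 f2 where P2: "is_pushout C i f i2 f2" and m2: "adm_monic C F i2"
        using exD(4)[OF EF, rule_format, of i f] h by blast
      obtain d2 where d2: "(i2, d2) \<in> F" using m2 unfolding adm_monic_def by blast
      obtain p q where pq: "p \<in> hom C (cod C i2) (cod C i1)" "q \<in> hom C (cod C i1) (cod C i2)"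
        "cmp C p i2 = i1" "cmp C q p = idm C (cod C i2)" "cmp C p q = idm C (cod C i1)"
        using po_unique[OF c P2 P1] by blast
      have "(cmp C p i2, cmp C d2 q) \<in> F"
        using transp_F[OF c EF d2, of p q] pq by (auto simp: hom_def)
      thus "adm_monic C F i1" using pq unfolding adm_monic_def by auto
    qed
    thus "\<exists>i' f'. is_pushout C i f i' f' \<and> adm_monic C (\<Inter>FF) i'"
      using mono_common[OF c ne ex] P1 by blast
  qed
  show "\<forall>d g. adm_epic C (\<Inter>FF) d \<and> g \<in> Mor C \<and> cod C g = cod C d \<longrightarrow>
        (\<exists>d' g'. is_pullback C d g d' g' \<and> adm_epic C (\<Inter>FF) d')"
  proof (intro allI impI)
    fix d g assume h: "adm_epic C (\<Inter>FF) d \<and> g \<in> Mor C \<and> cod C g = cod C d"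
    have "adm_epic C F0 d" using h inter_epic[OF _ ne] by blast
    then obtain d1 g1 where P1: "is_pullback C d g d1 g1" using exD(5)[OF E0, rule_format, of d g] h by blast
    have "\<forall>F\<in>FF. adm_epic C F d1"
    proof
      fix F assume F: "F \<in> FF"
      have EF: "exact_structure C F" using ex F by blast
      have "adm_epic C F d" using h inter_epic[OF _ F] by blast
      then obtain d2 g2 where P2: "is_pullback C d g d2 g2" and m2: "adm_epic C F d2"
        using exD(5)[OF EF, rule_format, of d g] h by blast
      obtain k2 where k2: "(k2, d2) \<in> F" using m2 unfolding adm_epic_def by blast
      have kk: "cod C k2 = dom C d2" using ex_kc[OF EF k2] unfolding kc_pair_def is_kernel_def by (elim conjE) assumption
      obtain p q where pq: "p \<in> hom C (dom C d1) (dom C d2)" "q \<in> hom C (dom C d2) (dom C d1)"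
        "cmp C d2 p = d1" "cmp C q p = idm C (dom C d1)" "cmp C p q = idm C (dom C d2)"
        using pb_unique[OF c P1 P2] by blast
      have "(cmp C q k2, cmp C d2 p) \<in> F"
        using transp_F[OF c EF k2, of q p] pq kk by (auto simp: hom_def)
      thus "adm_epic C F d1" using pq unfolding adm_epic_def by auto
    qed
    thus "\<exists>d' g'. is_pullback C d g d' g' \<and> adm_epic C (\<Inter>FF) d'"
      using epi_common[OF c ne ex] P1 by blast
  qed
qed

theorem theorem5p3:
  fixes C :: "('o, 'm) addcat" and E E' :: "('m \<times> 'm) set"
  assumes "is_additive C"
    and Emax: "\<exists>Emax \<in> Ex C. \<forall>F \<in> Ex C. F \<subseteq> Emax"
    and "E \<in> Ex C" and "E' \<in> Ex C"
  shows "E \<inter> E' \<in> Ex C \<and> E \<inter> E' \<subseteq> E \<and> E \<inter> E' \<subseteq> E' \<and>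
         (\<forall>F \<in> Ex C. F \<subseteq> E \<and> F \<subseteq> E' \<longrightarrow> F \<subseteq> E \<inter> E') \<and>
         \<Inter>{E'' \<in> Ex C. E \<subseteq> E'' \<and> E' \<subseteq> E''} \<in> Ex C \<and>
         E \<subseteq> \<Inter>{E'' \<in> Ex C. E \<subseteq> E'' \<and> E' \<subseteq> E''} \<and>
         E' \<subseteq> \<Inter>{E'' \<in> Ex C. E \<subseteq> E'' \<and> E' \<subseteq> E''} \<and>
         (\<forall>F \<in> Ex C. E \<subseteq> F \<and> E' \<subseteq> F \<longrightarrow> \<Inter>{E'' \<in> Ex C. E \<subseteq> E'' \<and> E' \<subseteq> E''} \<subseteq> F)"
proof -
  have c: "is_category C" using assms(1) unfolding is_additive_def is_preadditive_def by blast
  have m: "E \<inter> E' \<in> Ex C"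
  proof -
    have "exact_structure C (\<Inter>{E, E'})"
      using inter_exact[OF c, of E "{E, E'}"] assms(3,4) unfolding Ex_def by blast
    thus ?thesis unfolding Ex_def by simp
  qed
  obtain M where M: "M \<in> Ex C" "\<forall>F \<in> Ex C. F \<subseteq> M" using Emax by blast
  have Mi: "M \<in> {E'' \<in> Ex C. E \<subseteq> E'' \<and> E' \<subseteq> E''}" using M assms(3,4) by blast
  have j: "\<Inter>{E'' \<in> Ex C. E \<subseteq> E'' \<and> E' \<subseteq> E''} \<in> Ex C"
    using inter_exact[OF c Mi] unfolding Ex_def by blast
  show ?thesis using m j by blast
qed

end
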